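(* Let $G$ be a directed graph in which every vertex is reachable from a vertex $s$, let $t$ be a vertex of $G$, and let $k\ge 1$ be an integer. Assume that for no $\ell\in\{k,\dots,2k-1\}$ does $G$ contain an $(s,t)$-path of length exactly $dist_G(s,t)+\ell$, and that $G$ contains an $(s,t)$-path of length at least $dist_G(s,t)+k$; let $P$ be such a path of minimum length. For $i\ge0$ let $L_i$ be the set of vertices at distance exactly $i$ from $s$. Let $p$ be the smallest integer $i\ge1$ such that $L_i$ contains more than one vertex of $P$, and let $u,v$ be the first and second vertices of $P$ (in order along $P$) lying in $L_p$. Let $x$ be the vertex of $P_{u,v}$ such that $P_{u,x}$ has length exactly $k$ (the path $P_{u,v}$ has more than $k$ edges). Let $k'=\min\{k+1,|V(P_{x,v})|\}$ and let $y$ be the first vertex of the subpath of $P_{u,v}$ formed by its last $k'$ vertices. Let $k''=\min\{2k+1,|V(P_{v,t})|\}$ and let $z$ be the last vertex of the subpath of $P_{v,t}$ formed by its first $k''$ vertices. Then every path $P'$ from $u$ to $x$ of length at most $k$ in the induced subgraph $G[\bigcup_{i\ge p}L_i]$ that is vertex disjoint from $P_{y,z}$ is vertex disjoint from $P_{x,v}$ except at the vertex $x$.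
   Context: Paths are simple directed paths; the length of a path is its number of edges. $dist_G(a,b)$ denotes the length of a shortest directed $(a,b)$-path in $G$. For a path $P$ and vertices $a,b$ on it (with $a$ before $b$), $P_{a,b}$ denotes the subpath of $P$ from $a$ to $b$. *)

theory Defs
  imports Main
begin

definition is_path :: "'a set \<Rightarrow> ('a \<times> 'a) set \<Rightarrow> 'a list \<Rightarrow> bool" where
  "is_path V E q \<longleftrightarrow> q \<noteq> [] \<and> distinct q \<and> set q \<subseteq> V \<and>
     (\<forall>i. Suc i < length q \<longrightarrow> (q ! i, q ! Suc i) \<in> E)"

definition path_len :: "'a list \<Rightarrow> nat" where
  "path_len q = length q - 1"

definition st_path :: "'a set \<Rightarrow> ('a \<times> 'a) set \<Rightarrow> 'a \<Rightarrow> 'a \<Rightarrow> 'a list \<Rightarrow> bool" where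
  "st_path V E a b q \<longleftrightarrow> is_path V E q \<and> hd q = a \<and> last q = b"

definition dist :: "'a set \<Rightarrow> ('a \<times> 'a) set \<Rightarrow> 'a \<Rightarrow> 'a \<Rightarrow> nat" where
  "dist V E a b = (LEAST n. \<exists>q. st_path V E a b q \<and> path_len q = n)"

definition level :: "'a set \<Rightarrow> ('a \<times> 'a) set \<Rightarrow> 'a \<Rightarrow> nat \<Rightarrow> 'a set" where
  "level V E s i = {w \<in> V. dist V E s w = i}"

definition subpath :: "'a list \<Rightarrow> nat \<Rightarrow> nat \<Rightarrow> 'a list" where
  "subpath q i j = drop i (take (Suc j) q)"

definition induced_edges :: "('a \<times> 'a) set \<Rightarrow> 'a set \<Rightarrow> ('a \<times> 'a) set" where
  "induced_edges E S = {(a, b) \<in> E. a \<in> S \<and> b \<in> S}"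

end

theory Submission
  imports Defs
begin
lemma path_app:
  assumes "is_path V E xs" "is_path V E ys" "set xs \<inter> set ys = {}" "(last xs, hd ys) \<in> E"
  shows "is_path V E (xs @ ys)"
proof -
  have ne: "xs \<noteq> []" "ys \<noteq> []" using assms(1,2) by (auto simp: is_path_def)
  have "(xs@ys)!i = xs!i" if "i < length xs" for i using that by (simp add: nth_append)
  have edges: "((xs@ys)!i, (xs@ys)!Suc i) \<in> E" if i: "Suc i < length (xs@ys)" for i
  proof -
    consider "Suc i < length xs" | "Suc i = length xs" | "length xs \<le> i" by linarith
    then show ?thesis
    proof cases
      case 1
      then show ?thesis using assms(1) by (simp add: nth_append is_path_def)
    next
      case 2
      then have "i = length xs - 1" by simp
      then have "(xs@ys)!i = last xs" using ne by (simp add: nth_append last_conv_nth)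
      moreover have "(xs@ys)!Suc i = hd ys" using 2 ne by (simp add: nth_append hd_conv_nth)
      ultimately show ?thesis using assms(4) by simp
    next
      case 3
      then have e1: "(xs@ys)!i = ys!(i - length xs)" by (simp add: nth_append)
      have e2: "(xs@ys)!Suc i = ys!Suc (i - length xs)" using 3 by (simp add: nth_append Suc_diff_le)
      have "Suc (i - length xs) < length ys" using i 3 by simp
      then show ?thesis using assms(2) e1 e2 by (simp add: is_path_def)
    qed
  qed
  show ?thesis using assms ne edges unfolding is_path_def by auto
qed

lemma path_take:
  assumes "is_path V E q" "0 < n" shows "is_path V E (take n q)"
  using assms unfolding is_path_def
  by (auto simp: distinct_take dest: in_set_takeD)

lemma path_drop:
  assumes "is_path V E q" "n < length q" shows "is_path V E (drop n q)"
  using assms unfolding is_path_def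
  by (auto simp: distinct_drop dest: in_set_dropD)

lemma path_mono:
  assumes "is_path V' E' q" "V' \<subseteq> V" "E' \<subseteq> E" shows "is_path V E q"
  using assms unfolding is_path_def by blast

lemma in_subpath:
  assumes "j < length q"
  shows "w \<in> set (subpath q i j) \<longleftrightarrow> (\<exists>n. i \<le> n \<and> n \<le> j \<and> w = q!n)"
proof
  assume "w \<in> set (subpath q i j)"
  then obtain n where n: "n < length (subpath q i j)" "w = subpath q i j ! n"
    by (auto simp: in_set_conv_nth)
  then show "\<exists>n. i \<le> n \<and> n \<le> j \<and> w = q!n" using assms
    by (intro exI[of _ "i+n"]) (auto simp: subpath_def)
next
  assume "\<exists>n. i \<le> n \<and> n \<le> j \<and> w = q!n"
  then obtain n where n: "i \<le> n" "n \<le> j" "w = q!n" by blast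
  have "subpath q i j ! (n - i) = w" "n - i < length (subpath q i j)"
    using n assms by (auto simp: subpath_def)
  then show "w \<in> set (subpath q i j)" by (metis nth_mem)
qed

lemma length_subpath: "j < length q \<Longrightarrow> length (subpath q i j) = Suc j - i"
  by (simp add: subpath_def)

lemma dist_le: "st_path V E a b q \<Longrightarrow> dist V E a b \<le> path_len q"
  unfolding dist_def by (rule Least_le) auto

lemma dist_ex: "\<exists>q. st_path V E a b q \<Longrightarrow> \<exists>q. st_path V E a b q \<and> path_len q = dist V E a b"
  unfolding dist_def by (rule LeastI_ex) auto

lemma dist_prefix:
  assumes "st_path V E a b q" "i < length q"
  shows "dist V E a (q!i) \<le> i"
proof -
  have "st_path V E a (q!i) (take (Suc i) q)"
  proof -
    have "take (Suc i) q = take i q @ [q!i]" using assms(2) by (simp add: take_Suc_conv_app_nth)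
    then have "last (take (Suc i) q) = q!i" by simp
    moreover have "hd (take (Suc i) q) = a" using assms by (auto simp: st_path_def is_path_def)
    ultimately show ?thesis using assms path_take[of V E q "Suc i"] by (simp add: st_path_def)
  qed
  moreover have "path_len (take (Suc i) q) = i" using assms(2) by (simp add: path_len_def)
  ultimately show ?thesis using dist_le by metis
qed

lemma dist_self: "a \<in> V \<Longrightarrow> dist V E a a = 0"
proof -
  assume "a \<in> V"
  then have "st_path V E a a [a]" by (simp add: st_path_def is_path_def)
  then show ?thesis using dist_le[of V E a a "[a]"] by (simp add: path_len_def)
qed

lemma dist_zero:
  assumes "\<exists>q. st_path V E a b q" "dist V E a b = 0" shows "b = a"
proof -
  obtain q where q: "st_path V E a b q" "path_len q = 0" using dist_ex[OF assms(1)] assms(2) by auto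
  then have "length q = 1" by (cases q) (auto simp: path_len_def st_path_def is_path_def)
  then show ?thesis using q by (cases q) (auto simp: st_path_def)
qed

lemma dist_edge:
  assumes "(x,y) \<in> E" "y \<in> V" "\<exists>q. st_path V E a x q"
  shows "dist V E a y \<le> Suc (dist V E a x)"
proof -
  obtain q where q: "st_path V E a x q" "path_len q = dist V E a x" using dist_ex[OF assms(3)] by auto
  show ?thesis
  proof (cases "y \<in> set q")
    case True
    then obtain i where i: "i < length q" "y = q!i" by (auto simp: in_set_conv_nth)
    then have "dist V E a y \<le> i" using dist_prefix[OF q(1)] by simp
    then show ?thesis using i q by (simp add: path_len_def)
  next
    case False
    have "is_path V E [y]" using assms(2) by (simp add: is_path_def)
    then have "is_path V E (q @ [y])" using q assms(1) False
      by (intro path_app) (auto simp: st_path_def)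
    then have "st_path V E a y (q @ [y])" using q by (auto simp: st_path_def is_path_def)
    then have "dist V E a y \<le> path_len (q@[y])" by (rule dist_le)
    moreover have "path_len (q@[y]) = Suc (path_len q)" using q
      by (cases q) (auto simp: path_len_def st_path_def is_path_def)
    ultimately show ?thesis using q by simp
  qed
qed

theorem lemma4:
  fixes V :: "'a set" and E :: "('a \<times> 'a) set" and s t :: 'a and k :: nat
    and P :: "'a list"
    and p iu iv ix iy iz k' k'' :: nat
  assumes finV: "finite V"
    and EV: "E \<subseteq> V \<times> V"
    and sV: "s \<in> V"
    and reach: "\<forall>w\<in>V. \<exists>q. st_path V E s w q"
    and tV: "t \<in> V"
    and k1: "k \<ge> 1"
    and no_len: "\<forall>l. k \<le> l \<and> l \<le> 2 * k - 1 \<longrightarrow>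
                   \<not> (\<exists>q. st_path V E s t q \<and> path_len q = dist V E s t + l)"
    and P_path: "st_path V E s t P"
    and P_long: "path_len P \<ge> dist V E s t + k"
    and P_min: "\<forall>q. st_path V E s t q \<and> path_len q \<ge> dist V E s t + k
                   \<longrightarrow> path_len P \<le> path_len q"
    and p_def: "p = (LEAST i. i \<ge> 1 \<and> card (level V E s i \<inter> set P) > 1)"
    and iu_def: "iu = (LEAST j. j < length P \<and> P ! j \<in> level V E s p)"
    and iv_def: "iv = (LEAST j. iu < j \<and> j < length P \<and> P ! j \<in> level V E s p)"
    and ix_def: "ix = iu + k"
    and k'_def: "k' = min (k + 1) (length (subpath P ix iv))"
    and iy_def: "iy = Suc iv - k'"
    and k''_def: "k'' = min (2 * k + 1) (length (subpath P iv (length P - 1)))"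
    and iz_def: "iz = iv + k'' - 1"
  shows "\<forall>P'. st_path (\<Union>i\<in>{i. i \<ge> p}. level V E s i)
                  (induced_edges E (\<Union>i\<in>{i. i \<ge> p}. level V E s i))
                  (P ! iu) (P ! ix) P'
           \<and> path_len P' \<le> k
           \<and> set P' \<inter> set (subpath P iy iz) = {}
           \<longrightarrow> set P' \<inter> set (subpath P ix iv) \<subseteq> {P ! ix}"
proof -
  have Pp: "is_path V E P" "hd P = s" "last P = t" using P_path by (auto simp: st_path_def)
  have Pne: "P \<noteq> []" using Pp by (simp add: is_path_def)
  define L where "L = length P - 1"
  have LP: "length P = Suc L" using Pne L_def by (cases P) auto
  have P0: "P!0 = s" using Pp Pne by (simp add: hd_conv_nth)
  have PL: "P!L = t" using Pp Pne by (simp add: last_conv_nth L_def)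
  have dP: "distinct P" using Pp by (simp add: is_path_def)
  have PV: "\<And>j. j < length P \<Longrightarrow> P!j \<in> V" using Pp by (auto simp: is_path_def)
  have Pedge: "\<And>j. Suc j < length P \<Longrightarrow> (P!j, P!Suc j) \<in> E" using Pp by (auto simp: is_path_def)
  have reachP: "\<And>j. j < length P \<Longrightarrow> \<exists>q. st_path V E s (P!j) q" using reach PV by blast
  define l where "l j = dist V E s (P!j)" for j
  have l0: "l 0 = 0" using dist_self[OF sV] P0 by (simp add: l_def)
  have lstep: "\<And>j. Suc j < length P \<Longrightarrow> l (Suc j) \<le> Suc (l j)"
    unfolding l_def using dist_edge Pedge PV reachP by (meson Suc_lessD)
  have lL: "l L = dist V E s t" using PL by (simp add: l_def)
  have dLt: "dist V E s t + k \<le> L" using P_long by (simp add: path_len_def L_def)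
  define m where "m = (LEAST j. j < length P \<and> l j \<noteq> j)"
  have mex: "m < length P \<and> l m \<noteq> m" unfolding m_def
    by (rule LeastI[of _ L]) (use LP lL dLt k1 in auto)
  have below_m: "\<And>i. i < m \<Longrightarrow> l i = i"
    using not_less_Least[of _ "\<lambda>j. j < length P \<and> l j \<noteq> j"] mex unfolding m_def[symmetric]
    by (metis order.strict_trans)
  have m1: "m \<ge> 1" using mex l0 by (cases m) auto
  have lm_lt: "l m < m"
  proof -
    have "l m \<le> Suc (l (m - 1))" using lstep[of "m-1"] mex m1 by simp
    also have "l (m-1) = m - 1" using below_m m1 by simp
    finally show ?thesis using mex m1 by simp
  qed
  have lm_pos: "l m \<ge> 1"
  proof (rule ccontr)
    assume "\<not> l m \<ge> 1"
    then have "P!m = s" using dist_zero[OF reachP[of m]] mex by (simp add: l_def)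
    then have "P!m = P!0" using P0 by simp
    then have "m = 0" using dP mex nth_eq_iff_index_eq by (metis LP zero_less_Suc)
    then show False using m1 by simp
  qed
  define c where "c = l m"
  have finL: "\<And>i. finite (level V E s i \<inter> set P)" by simp
  have card_c: "card (level V E s c \<inter> set P) > 1"
  proof -
    have lc: "l c = c" using below_m lm_lt c_def by simp
    have "c < length P" using lm_lt mex c_def by simp
    then have "P!c \<in> level V E s c \<inter> set P" using lc PV by (simp add: level_def l_def)
    moreover have "P!m \<in> level V E s c \<inter> set P" using mex PV by (simp add: level_def l_def c_def)
    moreover have "P!c \<noteq> P!m" using dP \<open>c < length P\<close> mex lm_lt c_def nth_eq_iff_index_eq by fastforce
    ultimately have "card {P!c, P!m} \<le> card (level V E s c \<inter> set P)"
      by (intro card_mono[OF finL]) auto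
    then show ?thesis using \<open>P!c \<noteq> P!m\<close> by simp
  qed
  have pex: "p \<ge> 1 \<and> card (level V E s p \<inter> set P) > 1"
    unfolding p_def by (rule LeastI[of _ c]) (use card_c lm_pos c_def in auto)
  have p_le: "p \<le> c" unfolding p_def by (rule Least_le) (use card_c lm_pos c_def in auto)
  have p_small: "\<And>i. 1 \<le> i \<Longrightarrow> i < p \<Longrightarrow> card (level V E s i \<inter> set P) \<le> 1"
    using not_less_Least[of _ "\<lambda>i. i \<ge> 1 \<and> card (level V E s i \<inter> set P) > 1"]
    unfolding p_def[symmetric] by force
  have lid: "\<And>i. i \<le> p \<Longrightarrow> l i = i" using below_m p_le lm_lt c_def by simp
  have p_lt: "p < length P" using p_le lm_lt mex c_def by simp
  have G: "\<And>j. j < length P \<Longrightarrow> l j < p \<Longrightarrow> j = l j"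
  proof -
    fix j assume j: "j < length P" "l j < p"
    show "j = l j"
    proof (cases "l j = 0")
      case True
      then have "P!j = s" using dist_zero[OF reachP[of j]] j by (simp add: l_def)
      then show ?thesis using P0 dP j True nth_eq_iff_index_eq by (metis LP zero_less_Suc)
    next
      case False
      define c' where "c' = l j"
      have c'p: "c' < length P" "l c' = c'" using j lid p_lt c'_def by auto
      have "P!c' \<in> level V E s c' \<inter> set P" using c'p PV by (simp add: level_def l_def)
      moreover have "P!j \<in> level V E s c' \<inter> set P" using j PV by (simp add: level_def l_def c'_def)
      moreover have "card (level V E s c' \<inter> set P) \<le> 1" using p_small False j c'_def by simp
      ultimately have "P!c' = P!j" using finL by (metis card_le_Suc0_iff_eq One_nat_def)
      then show ?thesis using dP c'p j nth_eq_iff_index_eq c'_def by metis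
    qed
  qed
  have iu_eq: "iu = p" unfolding iu_def
  proof (rule Least_equality)
    show "p < length P \<and> P ! p \<in> level V E s p" using p_lt PV lid by (simp add: level_def l_def)
  next
    fix y assume "y < length P \<and> P ! y \<in> level V E s p"
    then have "l y = p" by (simp add: level_def l_def)
    moreover have "y < p \<Longrightarrow> l y = y" using lid by simp
    ultimately show "p \<le> y" by linarith
  qed
  have ivprops: "iu < iv \<and> iv < length P \<and> P!iv \<in> level V E s p" unfolding iv_def
  proof (rule LeastI_ex)
    have "\<not> level V E s p \<inter> set P \<subseteq> {P!p}"
    proof
      assume "level V E s p \<inter> set P \<subseteq> {P!p}"
      then have "card (level V E s p \<inter> set P) \<le> card {P!p}" by (intro card_mono) auto
      then show False using pex by simp
    qed
    then obtain w where w: "w \<in> level V E s p" "w \<in> set P" "w \<noteq> P!p" by blast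
    then obtain j where j: "j < length P" "w = P!j" by (auto simp: in_set_conv_nth)
    have "j \<noteq> p" using w j by auto
    moreover have "\<not> j < p"
    proof
      assume "j < p" then have "l j = j" using lid by simp
      moreover have "l j = p" using w j by (simp add: level_def l_def)
      ultimately show False using \<open>j < p\<close> by simp
    qed
    ultimately show "\<exists>j. iu < j \<and> j < length P \<and> P ! j \<in> level V E s p"
      using j w iu_eq by (intro exI[of _ j]) auto
  qed
  have liv: "l iv = p" using ivprops by (simp add: level_def l_def)
  obtain R where R: "st_path V E s (P!iv) R" "path_len R = p"
    using dist_ex[OF reachP[of iv]] ivprops liv by (auto simp: l_def)
  have Rne: "R \<noteq> []" using R by (simp add: st_path_def is_path_def)
  have lenR: "length R = Suc p" using R Rne by (cases R) (auto simp: path_len_def)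
  have Rlev: "\<And>w. w \<in> set R \<Longrightarrow> w \<noteq> P!iv \<Longrightarrow> dist V E s w < p"
  proof -
    fix w assume w: "w \<in> set R" "w \<noteq> P!iv"
    then obtain i where i: "i < length R" "w = R!i" by (auto simp: in_set_conv_nth)
    have "i \<noteq> p" using i w R lenR Rne by (auto simp: st_path_def last_conv_nth)
    then have "i < p" using i lenR by simp
    then show "dist V E s w < p" using dist_prefix[OF R(1) i(1)] i by simp
  qed
  define R' where "R' = R @ drop (Suc iv) P"
  have R'st: "st_path V E s t R'"
  proof (cases "Suc iv = length P")
    case True
    then have "P!iv = t" using PL LP by simp
    then show ?thesis using R True by (simp add: R'_def)
  next
    case False
    then have sl: "Suc iv < length P" using ivprops by simp
    have disj: "set R \<inter> set (drop (Suc iv) P) = {}"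
    proof (rule ccontr)
      assume "set R \<inter> set (drop (Suc iv) P) \<noteq> {}"
      then obtain w where w: "w \<in> set R" "w \<in> set (drop (Suc iv) P)" by blast
      then obtain n where n: "n < length P - Suc iv" "w = P!(Suc iv + n)"
        by (auto simp: in_set_conv_nth)
      show False
      proof (cases "w = P!iv")
        case True
        then show ?thesis using n dP ivprops nth_eq_iff_index_eq by fastforce
      next
        case False
        then have "l (Suc iv + n) < p" using Rlev w n by (simp add: l_def)
        then have "Suc iv + n = l (Suc iv + n)" using G n by simp
        then show ?thesis using \<open>l (Suc iv + n) < p\<close> ivprops iu_eq by simp
      qed
    qed
    have "is_path V E R'" unfolding R'_def
      using R path_drop[OF Pp(1) sl] disj Pedge[OF sl] Rne sl
      by (intro path_app) (auto simp: st_path_def hd_drop_conv_nth)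
    then show ?thesis using R sl Pp Rne by (auto simp: st_path_def R'_def)
  qed
  have lenR': "path_len R' = p + (L - iv)" using lenR LP ivprops
    by (simp add: R'_def path_len_def)
  have F3a: "dist V E s t \<le> p + (L - iv)" using dist_le[OF R'st] lenR' by simp
  have F3b: "p + (L - iv) < dist V E s t + k"
  proof (rule ccontr)
    assume "\<not> ?thesis"
    then have "path_len P \<le> path_len R'" using P_min R'st lenR' by auto
    then have "L \<le> p + (L - iv)" using lenR' LP by (simp add: path_len_def)
    then show False using ivprops iu_eq LP by arith
  qed
  show ?thesis
  proof (intro allI impI)
    fix P'
    define W where "W = (\<Union>i\<in>{i. i \<ge> p}. level V E s i)"
    assume H0: "st_path (\<Union>i\<in>{i. i \<ge> p}. level V E s i)
                  (induced_edges E (\<Union>i\<in>{i. i \<ge> p}. level V E s i))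
                  (P ! iu) (P ! ix) P'
           \<and> path_len P' \<le> k
           \<and> set P' \<inter> set (subpath P iy iz) = {}"
    then have H: "st_path W (induced_edges E W) (P ! iu) (P ! ix) P'"
       "path_len P' \<le> k" "set P' \<inter> set (subpath P iy iz) = {}"
      unfolding W_def by auto
    have WV: "W \<subseteq> V" by (auto simp: W_def level_def)
    have WE: "induced_edges E W \<subseteq> E" by (auto simp: induced_edges_def)
    have P'path: "is_path V E P'" using H(1) path_mono WV WE by (auto simp: st_path_def)
    have P'ne: "P' \<noteq> []" using P'path by (simp add: is_path_def)
    have P'hd: "P'!0 = P!p" using H(1) P'ne iu_eq by (simp add: st_path_def hd_conv_nth)
    have P'last: "P'!(length P' - 1) = P!ix" using H(1) P'ne by (simp add: st_path_def last_conv_nth)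
    have P'lev: "\<And>w. w \<in> set P' \<Longrightarrow> p \<le> dist V E s w"
      using H(1) by (auto simp: st_path_def is_path_def W_def level_def)
    have dP': "distinct P'" using P'path by (simp add: is_path_def)
    show "set P' \<inter> set (subpath P ix iv) \<subseteq> {P ! ix}"
    proof (rule ccontr)
      assume "\<not> ?thesis"
      then obtain w where w: "w \<in> set P'" "w \<in> set (subpath P ix iv)" "w \<noteq> P!ix" by blast
      then obtain i0 where i0: "ix \<le> i0" "i0 \<le> iv" "w = P!i0"
        using in_subpath[of iv P w ix] ivprops by auto
      have ix_i0: "ix < i0" using i0 w by (cases "ix = i0") auto
      obtain b0 where b0: "b0 < length P'" "w = P'!b0" using w by (auto simp: in_set_conv_nth)
      define a where "a = (LEAST b. b < length P' \<and> (\<exists>i. ix < i \<and> i < length P \<and> P'!b = P!i))"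
      have aex: "a < length P' \<and> (\<exists>i. ix < i \<and> i < length P \<and> P'!a = P!i)"
        unfolding a_def by (rule LeastI[of _ b0]) (use b0 i0 ix_i0 ivprops in auto)
      have amin: "\<And>b i. b < a \<Longrightarrow> ix < i \<Longrightarrow> i < length P \<Longrightarrow> P'!b \<noteq> P!i"
        using not_less_Least[of _ "\<lambda>b. b < length P' \<and> (\<exists>i. ix < i \<and> i < length P \<and> P'!b = P!i)"]
        aex unfolding a_def[symmetric] by (metis order.strict_trans)
      obtain j where j: "ix < j" "j < length P" "P'!a = P!j" using aex by blast
      have a_ne: "a \<noteq> length P' - 1"
      proof
        assume "a = length P' - 1"
        then have "P!j = P!ix" using P'last j by simp
        then show False using dP j nth_eq_iff_index_eq by fastforce
      qed
      have ak: "a < k" using a_ne aex H(2) unfolding path_len_def by linarith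
      define A where "A = take p P"
      define B where "B = take (Suc a) P'"
      define C where "C = drop (Suc j) P"
      have Apath: "is_path V E A" using path_take[OF Pp(1)] pex by (simp add: A_def)
      have Bpath: "is_path V E B" using path_take[OF P'path] by (simp add: B_def)
      have Alast: "last A = P!(p-1)"
      proof -
        have "take (Suc (p-1)) P = take (p-1) P @ [P!(p-1)]" using p_lt
          by (simp add: take_Suc_conv_app_nth)
        then show ?thesis using pex by (simp add: A_def)
      qed
      have Bhd: "hd B = P!p" using P'ne P'hd by (simp add: B_def hd_conv_nth)
      have Blast: "last B = P!j"
      proof -
        have "take (Suc a) P' = take a P' @ [P'!a]" using aex
          by (simp add: take_Suc_conv_app_nth)
        then show ?thesis using j by (simp add: B_def)
      qed
      have AB_disj: "set A \<inter> set B = {}"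
      proof (rule ccontr)
        assume "set A \<inter> set B \<noteq> {}"
        then obtain w where "w \<in> set A" "w \<in> set B" by blast
        then obtain i where i: "i < p" "w = P!i" using p_lt by (auto simp: A_def in_set_conv_nth)
        have "w \<in> set P'" using \<open>w \<in> set B\<close> by (auto simp: B_def dest: in_set_takeD)
        then have "p \<le> l i" using P'lev i by (simp add: l_def)
        then show False using lid i by simp
      qed
      have ABpath: "is_path V E (A @ B)"
        using Apath Bpath AB_disj Alast Bhd Pedge[of "p-1"] pex p_lt by (intro path_app) auto
      have ABlast: "last (A @ B) = P!j" using Blast Bpath by (auto simp: is_path_def)
      have ABhd: "hd (A @ B) = s" using pex P0 Pne p_lt by (simp add: A_def hd_conv_nth nth_append)
      have lenAB: "length (A @ B) = p + Suc a" using p_lt aex by (simp add: A_def B_def)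
      define Q where "Q = A @ B @ C"
      have Qst: "st_path V E s t Q"
      proof (cases "Suc j = length P")
        case True
        then have "C = []" by (simp add: C_def)
        moreover have "P!j = t" using True LP PL by simp
        ultimately show ?thesis using ABpath ABlast ABhd by (simp add: Q_def st_path_def)
      next
        case False
        then have sj: "Suc j < length P" using j by simp
        have disj: "set (A @ B) \<inter> set C = {}"
        proof (rule ccontr)
          assume "set (A @ B) \<inter> set C \<noteq> {}"
          then obtain w where w: "w \<in> set (A @ B)" "w \<in> set C" by blast
          then obtain n where n: "n < length P - Suc j" "w = P!(Suc j + n)"
            by (auto simp: C_def in_set_conv_nth)
          show False
          proof (cases "w \<in> set A")
            case True
            then obtain i where i: "i < p" "w = P!i" using p_lt by (auto simp: A_def in_set_conv_nth)
            have "P!i = P!(Suc j + n)" using i n by simp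
            moreover have "i < length P" "Suc j + n < length P" using i p_lt n by auto
            ultimately have "i = Suc j + n" using nth_eq_iff_index_eq[OF dP] by blast
            then show False using i j ix_def iu_eq by simp
          next
            case False
            then have "w \<in> set B" using w by simp
            then obtain b where b: "b < Suc a" "w = P'!b" using aex by (auto simp: B_def in_set_conv_nth)
            show False
            proof (cases "b < a")
              case True
              moreover have "Suc j + n < length P" using n by simp
              ultimately show False using amin[of b "Suc j + n"] b n j by simp
            next
              case False
              then have "b = a" using b by simp
              then have "P!j = P!(Suc j + n)" using b n j by simp
              then show False using dP n j nth_eq_iff_index_eq by fastforce
            qed
          qed
        qed
        have "is_path V E Q" unfolding Q_def
          using path_app[OF ABpath path_drop[OF Pp(1) sj] disj[unfolded C_def]] ABlast Pedge[OF sj] sj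
          by (simp add: hd_drop_conv_nth C_def)
        moreover have "last Q = t" using sj Pp by (simp add: Q_def C_def)
        moreover have "hd Q = s" using ABhd ABpath unfolding Q_def is_path_def by (metis append_assoc hd_append2)
        ultimately show ?thesis by (simp add: st_path_def)
      qed
      have lenQ: "path_len Q = p + a + (L - j)" using lenAB LP j
        by (simp add: Q_def C_def path_len_def)
      have Qd: "dist V E s t \<le> p + a + (L - j)" using dist_le[OF Qst] lenQ by simp
      have jL: "j \<le> L" using j LP by simp
      have ivL: "iv \<le> L" using ivprops LP by simp
      have ix_iv: "ix < iv" using ix_i0 i0 by simp
      have notin: "P!j \<notin> set (subpath P iy iz)" using H(3) j aex by (metis disjoint_iff nth_mem)
      have izL: "iz \<le> L" using ivL k''_def iz_def length_subpath[of "length P - 1" P iv] LP by simp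
      have "\<not> (iy \<le> j \<and> j \<le> iz)"
        using notin in_subpath[of iz P "P!j" iy] izL LP by auto
      then consider "iz < j" | "j < iy" by linarith
      then show False
      proof cases
        case 1
        have k''v: "k'' = min (2 * k + 1) (Suc L - iv)"
          using k''_def length_subpath[of "length P - 1" P iv] LP by simp
        have "iz = iv + 2 * k" using 1 jL iz_def k''v by (auto simp: min_def split: if_splits)
        then show False using 1 Qd F3b ak jL ivL by linarith
      next
        case 2
        have k'v: "k' = min (k + 1) (Suc iv - ix)"
          using k'_def length_subpath[of iv P ix] ivprops by simp
        have "iy = iv - k \<and> k \<le> iv" using 2 ix_iv j iy_def k'v by (auto simp: min_def split: if_splits)
        then have "j < iv - k" using 2 by simp
        then have "dist V E s t + k < path_len Q" using lenQ F3a jL ivL by linarith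
        moreover have "path_len Q < path_len P" using lenQ ak j ix_def iu_eq jL LP
          by (simp add: path_len_def)
        ultimately show False using P_min Qst by force
      qed
    qed
  qed
qed
end
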